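(* For $v\in\mathbb{C}$ and integers $r\geq0$ define \begin{align*} \rho_r(v)&=\delta_{r,0}-\sum_{m=0}^{2r+1}(-1)^m\binom{v}{2r+1-m}\sum_{k=0}^{m}\frac{(2r+2k)!!}{(-1)^k k!}\mathcal{A}_{m,k}\!\left(\tfrac13,\tfrac14,\tfrac15,\dots\right),\\ \gamma_r(v)&=\sum_{m=0}^{2r}(-1)^m\binom{v}{2r-m}\sum_{k=0}^{m}\frac{(2r+2k-1)!!}{(-1)^k k!}\mathcal{A}_{m,k}\!\left(\tfrac13,\tfrac14,\tfrac15,\dots\right),\\ \tilde\rho_r(v)&=-\sum_{m=0}^{2r+1}\frac{v^{2r+1-m}}{(2r+1-m)!}\sum_{k=0}^{m}\frac{(2r+2k)!!}{(-1)^k k!}\mathcal{A}_{m,k}\!\left(\tfrac1{3!},\tfrac1{4!},\tfrac1{5!},\dots\right),\\ \tilde\gamma_r(v)&=\sum_{m=0}^{2r}\frac{v^{2r-m}}{(2r-m)!}\sum_{k=0}^{m}\frac{(2r+2k-1)!!}{(-1)^k k!}\mathcal{A}_{m,k}\!\left(\tfrac1{3!},\tfrac1{4!},\tfrac1{5!},\dots\right). \end{align*} Then $\rho_0(v)=\tilde\rho_0(v)$, $\gamma_0(v)=\tilde\gamma_0(v)$, and for $r\geq1$, \[ \rho_r(v)=\tilde\rho_r(v)+v\,\tilde\rho_{r-1}(v),\qquad \gamma_r(v)=\tilde\gamma_r(v)+v\,\tilde\gamma_{r-1}(v). \]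
   Context: De Moivre polynomial $\mathcal{A}_{n,k}(a_1,a_2,\dots)$: coefficient of $x^n$ in $(a_1x+a_2x^2+\cdots)^k$ (so $\mathcal{A}_{0,0}=1$, $\mathcal{A}_{n,k}=0$ for $n<k$). Double factorial $n!!=n(n-2)\cdots$ down to $1$ or $2$ for $n\geq1$, $0!!=(-1)!!=1$. $\binom{v}{j}=v(v-1)\cdots(v-j+1)/j!$; $\delta_{r,0}$ Kronecker delta. (The $\rho_r(v)$ are the asymptotic expansion coefficients of $\theta_n(v)$ in $\sum_{j=0}^{n+v-1}\frac{n^j}{j!}+\frac{n^{n+v}}{(n+v)!}\theta_n(v)=\frac{e^n}{2}$, and the $\gamma_r(v)$ those of $\Gamma(n+v+1)/(\sqrt{2\pi n}\,n^{n+v}e^{-n})$.) *)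

theory Defs
  imports Complex_Main "HOL-Computational_Algebra.Formal_Power_Series"
begin

text \<open>De Moivre polynomial: coefficient of x^n in (a_1 x + a_2 x^2 + ...)^k,
  where the sequence is given as a function a with a j = a_j for j \<ge> 1 (a 0 is ignored).\<close>
definition deMoivre :: "(nat \<Rightarrow> 'a::comm_ring_1) \<Rightarrow> nat \<Rightarrow> nat \<Rightarrow> 'a" where
  "deMoivre a n k = fps_nth ((Abs_fps (\<lambda>j. if j = 0 then 0 else a j)) ^ k) n"

function dfact :: "int \<Rightarrow> int" where
  "dfact n = (if n \<le> 0 then 1 else n * dfact (n - 2))"
  by auto
termination by (relation "measure (\<lambda>n. nat n)") auto

definition seqA :: "nat \<Rightarrow> complex" where "seqA j = 1 / of_nat (j + 2)"
definition seqB :: "nat \<Rightarrow> complex" where "seqB j = 1 / of_nat (fact (j + 2))"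

definition rho :: "nat \<Rightarrow> complex \<Rightarrow> complex" where
  "rho r v = (if r = 0 then 1 else 0) -
     (\<Sum>m=0..2*r+1. (-1)^m * (v gchoose (2*r+1-m)) *
        (\<Sum>k=0..m. of_int (dfact (2*int r + 2*int k)) / ((-1)^k * fact k) * deMoivre seqA m k))"

definition gam :: "nat \<Rightarrow> complex \<Rightarrow> complex" where
  "gam r v =
     (\<Sum>m=0..2*r. (-1)^m * (v gchoose (2*r-m)) *
        (\<Sum>k=0..m. of_int (dfact (2*int r + 2*int k - 1)) / ((-1)^k * fact k) * deMoivre seqA m k))"

definition rhot :: "nat \<Rightarrow> complex \<Rightarrow> complex" where
  "rhot r v = -
     (\<Sum>m=0..2*r+1. v^(2*r+1-m) / fact (2*r+1-m) *
        (\<Sum>k=0..m. of_int (dfact (2*int r + 2*int k)) / ((-1)^k * fact k) * deMoivre seqB m k))"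

definition gamt :: "nat \<Rightarrow> complex \<Rightarrow> complex" where
  "gamt r v =
     (\<Sum>m=0..2*r. v^(2*r-m) / fact (2*r-m) *
        (\<Sum>k=0..m. of_int (dfact (2*int r + 2*int k - 1)) / ((-1)^k * fact k) * deMoivre seqB m k))"

end

theory Submission
  imports Defs
begin

unbundle fps_syntax


lemma res_lemma:
  fixes Y W :: "complex fps"
  assumes WY: "W * Y = 1" and m: "m \<ge> 1"
  shows "(fps_deriv (fps_X * Y) * W^m) $ (m-1) = (if m = 1 then 1 else 0)"
proof (cases "m = 1")
  case True
  have "W $ 0 * Y $ 0 = 1" using arg_cong[OF WY, of "\<lambda>f. f $ 0"] by simp
  then show ?thesis using True by (simp add: mult.commute)
next
  case False
  define X where "X = fps_X * Y"
  have d0: "fps_deriv W * Y + W * fps_deriv Y = 0"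
    using arg_cong[OF WY, of fps_deriv] by (simp add: algebra_simps)
  have dX: "fps_deriv X = Y + fps_X * fps_deriv Y" unfolding X_def by simp
  have key: "fps_X * fps_deriv W = W - fps_deriv X * W^2"
  proof -
    have "fps_X * fps_deriv W = fps_X * fps_deriv W * (W * Y)" using WY by simp
    also have "\<dots> = W * (fps_X * (fps_deriv W * Y))" by (simp add: algebra_simps)
    also have "\<dots> = W * (fps_X * (- W * fps_deriv Y))"
      using d0 by (simp add: add_eq_0_iff)
    also have "\<dots> = - W * W * (fps_X * fps_deriv Y)" by (simp add: algebra_simps)
    also have "\<dots> = - W * W * (fps_deriv X - Y)" using dX by simp
    also have "\<dots> = W * (W * Y) - fps_deriv X * W^2" by (simp add: algebra_simps power2_eq_square)
    finally show ?thesis using WY by simp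
  qed
  define k where "k = m - 2"
  have k: "m = k + 2" using m False unfolding k_def by linarith
  define V where "V = W^(k+1)"
  have "fps_deriv V = fps_const (of_nat (k+1)) * fps_deriv W * W^k"
    unfolding V_def by (subst fps_deriv_power) simp
  then have "fps_X * fps_deriv V = fps_const (of_nat (k+1)) * W^k * (fps_X * fps_deriv W)"
    by (simp only: mult_ac)
  also have "\<dots> = fps_const (of_nat (k+1)) * (W^k * W - fps_deriv X * (W^k * W^2))"
    unfolding key by (simp only: right_diff_distrib mult_ac)
  also have "\<dots> = fps_const (of_nat (k+1)) * (V - fps_deriv X * W^m)"
    unfolding V_def k by (simp only: power_add[symmetric] power_Suc2[symmetric] Suc_eq_plus1)
  finally have e: "fps_X * fps_deriv V = fps_const (of_nat (k+1)) * (V - fps_deriv X * W^m)" .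
  have "(fps_X * fps_deriv V) $ (k+1) = of_nat (k+1) * V $ (k+1)" by simp
  moreover have "(fps_X * fps_deriv V) $ (k+1) = of_nat (k+1) * (V $ (k+1) - (fps_deriv X * W^m) $ (k+1))"
    unfolding e by (simp only: fps_mult_left_const_nth fps_sub_nth)
  ultimately have "of_nat (k+1) * (fps_deriv X * W^m) $ (k+1) = (0::complex)"
    by (simp add: algebra_simps)
  then have "(fps_deriv X * W^m) $ (k+1) = 0" by (simp del: of_nat_Suc)
  then show ?thesis using k False X_def by simp
qed

lemma Xpow_nth_small:
  fixes Y :: "complex fps"
  assumes "j < i"
  shows "((fps_X * Y)^i) $ j = 0"
  using assms by (simp add: power_mult_distrib fps_X_power_mult_nth)

lemma compose_mult_nth_expand:
  fixes F Y G :: "complex fps"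
  shows "((F oo (fps_X * Y)) * G) $ n = (\<Sum>i=0..n. F $ i * ((fps_X * Y)^i * G) $ n)"
proof -
  let ?X = "fps_X * Y"
  have "((F oo ?X) * G) $ n = (\<Sum>j=0..n. (\<Sum>i=0..j. F$i * (?X^i $ j)) * G $ (n - j))"
    by (simp add: fps_mult_nth fps_compose_nth)
  also have "\<dots> = (\<Sum>j=0..n. (\<Sum>i=0..n. F$i * (?X^i $ j)) * G $ (n - j))"
  proof (rule sum.cong[OF refl])
    fix j assume j: "j \<in> {0..n}"
    have "(\<Sum>i=0..n. F$i * (?X^i $ j)) = (\<Sum>i=0..j. F$i * (?X^i $ j))"
      by (rule sum.mono_neutral_right) (use j Xpow_nth_small in auto)
    then show "(\<Sum>i=0..j. F$i * (?X^i $ j)) * G $ (n - j) = (\<Sum>i=0..n. F$i * (?X^i $ j)) * G $ (n - j)"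
      by simp
  qed
  also have "\<dots> = (\<Sum>j=0..n. \<Sum>i=0..n. F$i * ((?X^i $ j) * G $ (n - j)))"
    by (simp add: sum_distrib_right mult.assoc)
  also have "\<dots> = (\<Sum>i=0..n. \<Sum>j=0..n. F$i * ((?X^i $ j) * G $ (n - j)))"
    by (rule sum.swap)
  also have "\<dots> = (\<Sum>i=0..n. F $ i * (?X^i * G) $ n)"
    by (simp add: fps_mult_nth sum_distrib_left)
  finally show ?thesis .
qed

lemma cv_lemma:
  fixes F Y W :: "complex fps"
  assumes WY: "W * Y = 1" and N: "N \<ge> 1"
  shows "((F oo (fps_X * Y)) * fps_deriv (fps_X * Y) * W^N) $ (N-1) = F $ (N-1)"
proof -
  define X where "X = fps_X * Y"
  define D where "D = fps_deriv X"
  have step1: "(X^i * (D * W^N)) $ (N-1) = (if i = N-1 then 1 else 0)" if i: "i \<le> N - 1" for i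
  proof -
    have WN: "W^N = W^i * W^(N-i)" using i N by (simp add: power_add[symmetric])
    have "X^i * (D * W^N) = fps_X^i * ((Y*W)^i * (D * W^(N-i)))"
      unfolding WN X_def by (simp add: power_mult_distrib mult_ac)
    also have "\<dots> = fps_X^i * (D * W^(N-i))" using WY by (simp add: mult.commute)
    finally have "(X^i * (D * W^N)) $ (N-1) = (D * W^(N-i)) $ (N - 1 - i)"
      using i by (simp only: fps_X_power_mult_nth) simp
    also have "N - 1 - i = N - i - 1" by simp
    also have "(D * W^(N-i)) $ (N - i - 1) = (if N - i = 1 then 1 else 0)"
      unfolding D_def X_def using res_lemma[OF WY, of "N-i"] i N by simp
    finally show ?thesis using i N by auto
  qed
  have "((F oo X) * D * W^N) $ (N-1) = (\<Sum>i=0..N-1. F $ i * (X^i * (D * W^N)) $ (N-1))"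
    unfolding mult.assoc X_def by (rule compose_mult_nth_expand)
  also have "\<dots> = (\<Sum>i=0..N-1. F $ i * (if i = N-1 then 1 else 0))"
  proof (rule sum.cong[OF refl])
    fix i assume "i \<in> {0..N-1}"
    then have "i \<le> N - 1" by simp
    from step1[OF this] show "F $ i * (X^i * (D * W^N)) $ (N-1) = F $ i * (if i = N-1 then 1 else 0)"
      by simp
  qed
  also have "\<dots> = (\<Sum>i=0..N-1. if i = N-1 then F $ i else 0)"
    by (rule sum.cong) auto
  also have "\<dots> = F $ (N-1)" by (subst sum.delta) auto
  finally show ?thesis unfolding X_def D_def .
qed



definition Pw :: "complex \<Rightarrow> complex fps \<Rightarrow> complex fps" where
  "Pw a Z = fps_binomial a oo Z"

lemma Pw_add: "Z $ 0 = 0 \<Longrightarrow> Pw (a + b) Z = Pw a Z * Pw b Z"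
  unfolding Pw_def by (simp add: fps_binomial_add_mult fps_compose_mult_distrib)

lemma Pw_0: "Pw 0 Z = 1"
  unfolding Pw_def by simp

lemma Pw_1: "Z $ 0 = 0 \<Longrightarrow> Pw 1 Z = 1 + Z"
  unfolding Pw_def by (simp add: fps_binomial_1 fps_compose_add_distrib)

lemma Pw_nth0 [simp]: "Pw a Z $ 0 = 1"
  unfolding Pw_def by simp

lemma Pw_compose: "Z $ 0 = 0 \<Longrightarrow> X $ 0 = 0 \<Longrightarrow> Pw a Z oo X = Pw a (Z oo X)"
  unfolding Pw_def by (simp add: fps_compose_assoc)

lemma Pw_power: "Z $ 0 = 0 \<Longrightarrow> Pw a Z ^ n = Pw (of_nat n * a) Z"
  by (induction n) (simp_all add: Pw_0 Pw_add[symmetric] algebra_simps)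

lemma Pw_inv: "Z $ 0 = 0 \<Longrightarrow> Pw (-1) Z * (1 + Z) = 1"
  using Pw_add[of Z "-1" 1] by (simp add: Pw_0 Pw_1)

lemma fps_sqrt_unique:
  fixes a b :: "complex fps"
  assumes "a^2 = b^2" "a $ 0 = b $ 0" "a $ 0 \<noteq> 0"
  shows "a = b"
proof -
  have "(a - b) * (a + b) = 0" using assms(1) by (simp add: algebra_simps power2_eq_square)
  moreover have "a + b \<noteq> 0"
  proof
    assume "a + b = 0"
    then have "(a + b) $ 0 = 0" by simp
    with assms(2,3) show False by simp
  qed
  ultimately show ?thesis by simp
qed

definition Es :: "complex fps" where "Es = fps_exp 1"
definition Ys :: "complex fps" where "Ys = Abs_fps (\<lambda>n. 1 / of_nat (fact (n+1)))"
definition Ws :: "complex fps" where "Ws = inverse Ys"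
definition Aser :: "complex fps" where
  "Aser = Abs_fps (\<lambda>j. if j = 0 then 0 else 2 * (-1)^j * seqA j)"
definition Bser :: "complex fps" where
  "Bser = Abs_fps (\<lambda>j. if j = 0 then 0 else 2 * seqB j)"

lemma Ys0 [simp]: "Ys $ 0 = 1" by (simp add: Ys_def)
lemma WsYs: "Ws * Ys = 1" unfolding Ws_def by (rule inverse_mult_eq_1) simp
lemma Aser0 [simp]: "Aser $ 0 = 0" by (simp add: Aser_def)
lemma Bser0 [simp]: "Bser $ 0 = 0" by (simp add: Bser_def)

lemma Xs_eq: "fps_X * Ys = Es - 1"
proof (rule fps_ext)
  fix n show "(fps_X * Ys) $ n = (Es - 1) $ n"
    by (cases n) (simp_all add: Ys_def Es_def)
qed

lemma Xs0 [simp]: "(fps_X * Ys) $ 0 = 0" by simp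

lemma Xs_deriv: "fps_deriv (fps_X * Ys) = Es"
  unfolding Xs_eq Es_def by simp

lemma I1: "fps_X^2 * (1 + Aser) = 2 * (fps_X - fps_ln 1)"
proof (rule fps_ext)
  fix n
  show "(fps_X^2 * (1 + Aser)) $ n = (2 * (fps_X - fps_ln 1)) $ n"
  proof (cases "n < 3")
    case True
    then consider "n = 0" | "n = 1" | "n = 2" by linarith
    then show ?thesis
      by cases (simp_all add: fps_X_power_mult_nth fps_ln_nth numeral_fps_const)
  next
    case False
    have "(fps_X^2 * (1 + Aser)) $ n = (1 + Aser) $ (n - 2)"
      using False by (simp add: fps_X_power_mult_nth)
    also have "\<dots> = 2 * (-1)^(n-2) / of_nat n"
      using False by (simp add: Aser_def seqA_def)
    also have "\<dots> = (fps_const 2 * (fps_X - fps_ln 1)) $ n"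
    proof -
      have "n - 1 = Suc (n - 2)" using False by simp
      then have "(-1::complex)^(n-1) = -((-1)^(n-2))" by simp
      then show ?thesis using False by (simp add: fps_ln_nth)
    qed
    finally show ?thesis by (simp add: numeral_fps_const)
  qed
qed

lemma I2: "fps_X^2 * (1 + Bser) = 2 * (Es - 1 - fps_X)"
proof (rule fps_ext)
  fix n
  show "(fps_X^2 * (1 + Bser)) $ n = (2 * (Es - 1 - fps_X)) $ n"
  proof (cases "n < 3")
    case True
    then consider "n = 0" | "n = 1" | "n = 2" by linarith
    then show ?thesis
      by cases (simp_all add: fps_X_power_mult_nth Es_def numeral_fps_const)
  next
    case False
    have "(fps_X^2 * (1 + Bser)) $ n = (1 + Bser) $ (n - 2)"
      using False by (simp add: fps_X_power_mult_nth)
    also have "\<dots> = 2 * seqB (n - 2)"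
      using False by (simp add: Bser_def)
    also have "\<dots> = 2 / of_nat (fact n)"
    proof -
      have e: "n - 2 + 2 = n" using False by simp
      show ?thesis unfolding seqB_def e by simp
    qed
    also have "\<dots> = (fps_const 2 * (Es - 1 - fps_X)) $ n"
      using False by (simp add: Es_def)
    finally show ?thesis by (simp add: numeral_fps_const)
  qed
qed

lemma ln_comp: "fps_ln 1 oo (Es - 1) = fps_X"
proof -
  have a: "fps_ln (1::complex) = fps_inv (fps_exp 1 - 1)" by (rule fps_ln_fps_exp_inv) simp
  have b: "fps_inv (fps_exp (1::complex) - 1) oo (fps_exp 1 - 1) = fps_X"
    by (rule fps_inv_fps_exp_compose(1)) simp
  show ?thesis unfolding Es_def a by (rule b)
qed

lemma binom_comp: "fps_binomial v oo (fps_X * Ys) = fps_exp v"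
proof -
  define f where "f = fps_binomial v oo (fps_X * Ys)"
  have h: "fps_deriv (fps_binomial v) * (1 + fps_X) = fps_const v * fps_binomial v"
    by (simp add: fps_binomial_deriv)
  have "(fps_deriv (fps_binomial v) * (1 + fps_X)) oo (fps_X * Ys) = fps_const v * f"
    unfolding h f_def by (simp add: fps_compose_mult_distrib)
  moreover have "(fps_deriv (fps_binomial v) * (1 + fps_X)) oo (fps_X * Ys)
      = (fps_deriv (fps_binomial v) oo (fps_X * Ys)) * Es"
  proof -
    have "(1 + fps_X) oo (fps_X * Ys) = 1 + fps_X * Ys"
      by (simp add: fps_compose_add_distrib)
    also have "\<dots> = Es" by (simp add: Xs_eq)
    finally have c: "(1 + fps_X) oo (fps_X * Ys) = Es" .
    show ?thesis by (simp only: fps_compose_mult_distrib[OF Xs0] c)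
  qed
  moreover have "fps_deriv f = (fps_deriv (fps_binomial v) oo (fps_X * Ys)) * Es"
    unfolding f_def by (simp only: fps_compose_deriv[OF Xs0] Xs_deriv)
  ultimately have "fps_deriv f = fps_const v * f" by simp
  then have "f = fps_const (f $ 0) * fps_exp v" by (simp add: fps_exp_unique_ODE)
  then show ?thesis unfolding f_def by simp
qed



lemma AXs: "Ys^2 * (1 + (Aser oo (fps_X * Ys))) = 1 + Bser"
proof -
  define X where "X = fps_X * Ys"
  have X0: "X $ 0 = 0" unfolding X_def by simp
  have "(fps_X^2 * (1 + Aser)) oo X = X^2 * (1 + (Aser oo X))"
    using X0 by (simp add: fps_compose_mult_distrib fps_compose_add_distrib fps_compose_power[symmetric])
  moreover have "(fps_X^2 * (1 + Aser)) oo X = 2 * (X - fps_X)"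
  proof -
    have "(fps_X^2 * (1 + Aser)) oo X = 2 * ((fps_X oo X) - (fps_ln 1 oo X))"
      unfolding I1 using X0 by (simp add: fps_compose_mult_distrib fps_compose_sub_distrib)
    also have "fps_ln 1 oo X = fps_X" using ln_comp by (simp add: X_def Xs_eq)
    finally show ?thesis using X0 by simp
  qed
  moreover have "fps_X^2 * (1 + Bser) = 2 * (X - fps_X)"
    unfolding I2 X_def Xs_eq by simp
  moreover have "X^2 = fps_X^2 * Ys^2" unfolding X_def by (simp add: power_mult_distrib)
  ultimately have "fps_X^2 * (Ys^2 * (1 + (Aser oo X))) = fps_X^2 * (1 + Bser)"
    by (simp add: mult.assoc)
  then show ?thesis unfolding X_def by simp
qed

lemma GX:
  "Pw (- of_nat N / 2) Aser oo (fps_X * Ys) = Ys^N * Pw (- of_nat N / 2) Bser"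
proof -
  let ?X = "fps_X * Ys"
  define C where "C = Aser oo ?X"
  have C0: "C $ 0 = 0" unfolding C_def by simp
  define S1 where "S1 = Pw (-1/2) C"
  define S2 where "S2 = Ys * Pw (-1/2) Bser"
  have sq1: "S1^2 * (1 + C) = 1"
  proof -
    have "S1^2 = Pw (-1) C" unfolding S1_def using Pw_power[OF C0, of "-1/2" 2] by simp
    then show ?thesis using Pw_inv[OF C0] by simp
  qed
  have sq2: "S2^2 * (1 + C) = 1"
  proof -
    have "S2^2 * (1 + C) = Pw (-1/2) Bser ^ 2 * (Ys^2 * (1 + C))"
      unfolding S2_def by (simp add: power_mult_distrib mult_ac)
    also have "\<dots> = Pw (-1) Bser * (1 + Bser)"
      unfolding C_def AXs using Pw_power[of Bser "-1/2" 2] by simp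
    also have "\<dots> = 1" by (rule Pw_inv) simp
    finally show ?thesis .
  qed
  have "S1^2 = S2^2"
  proof -
    have "S1^2 = S1^2 * (S2^2 * (1 + C))" using sq2 by simp
    also have "\<dots> = S2^2 * (S1^2 * (1 + C))" by (simp only: mult_ac)
    also have "\<dots> = S2^2" using sq1 by simp
    finally show ?thesis .
  qed
  then have S12: "S1 = S2"
    by (rule fps_sqrt_unique) (simp_all add: S1_def S2_def)
  have "Pw (- of_nat N / 2) Aser oo ?X = Pw (- of_nat N / 2) C"
    unfolding C_def by (rule Pw_compose) simp_all
  also have "\<dots> = S1^N" unfolding S1_def using Pw_power[OF C0, of "-1/2" N] by simp
  also have "\<dots> = Ys^N * Pw (-1/2) Bser ^ N" unfolding S12 S2_def by (simp add: power_mult_distrib)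
  also have "\<dots> = Ys^N * Pw (- of_nat N / 2) Bser" using Pw_power[of Bser "-1/2" N] by simp
  finally show ?thesis .
qed

lemma main_sub:
  assumes N: "N \<ge> 1"
  shows "(fps_binomial v * Pw (- of_nat N / 2) Aser) $ (N-1)
       = (fps_exp (v+1) * Pw (- of_nat N / 2) Bser) $ (N-1)"
proof -
  let ?X = "fps_X * Ys"
  let ?F = "fps_binomial v * Pw (- of_nat N / 2) Aser"
  have "?F oo ?X = fps_exp v * (Ys^N * Pw (- of_nat N / 2) Bser)"
    by (simp only: fps_compose_mult_distrib[OF Xs0] binom_comp GX)
  then have "(?F oo ?X) * fps_deriv ?X * Ws^N = fps_exp v * Es * (Ws * Ys)^N * Pw (- of_nat N / 2) Bser"
    by (simp only: Xs_deriv power_mult_distrib mult_ac)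
  also have "\<dots> = fps_exp (v+1) * Pw (- of_nat N / 2) Bser"
    by (simp add: WsYs Es_def fps_exp_add_mult)
  finally show ?thesis using cv_lemma[OF WsYs N, of ?F] by simp
qed



definition Kser :: "complex fps" where "Kser = Pw (-1/2) Bser"

lemma Pw_K: "Pw (- of_nat N / 2) Bser = Kser ^ N"
  unfolding Kser_def using Pw_power[of Bser "-1/2" N] by simp

lemma K0 [simp]: "Kser $ 0 = 1" by (simp add: Kser_def)

lemma K2: "Kser^2 * (1 + Bser) = 1"
proof -
  have "Kser^2 = Pw (-1) Bser" unfolding Kser_def using Pw_power[of Bser "-1/2" 2] by simp
  then show ?thesis using Pw_inv[of Bser] by simp
qed

lemma Bn: "n \<ge> 1 \<Longrightarrow> Bser $ n = 2 / fact (n+2)"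
  by (simp add: Bser_def seqB_def algebra_simps)

lemma dB_aux1:
  fixes F x D :: complex
  assumes "D \<noteq> 0" "F \<noteq> 0" "D = (x+2) * F"
  shows "x * (2 / D) = 2 / F - 2 * (2 / D)"
proof -
  have "x * (2 / D) * (D * F) = (2 / F - 2 * (2 / D)) * (D * F)"
    using assms(1,2) by (simp add: field_simps assms(3))
  then show ?thesis using assms(1,2) by simp
qed

lemma dB_aux:
  fixes F :: complex
  assumes "F \<noteq> 0"
  shows "of_nat n * (2 / (of_nat (n+2) * F)) = 2 / F - 2 * (2 / (of_nat (n+2) * F))"
proof (rule dB_aux1)
  have "(of_nat (n+2) :: complex) \<noteq> 0" by (simp only: of_nat_eq_0_iff)
  then show "of_nat (n+2) * F \<noteq> 0" using assms by simp
qed (use assms in simp_all)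

lemma dB: "fps_X * fps_deriv Bser = fps_X * (1 + Bser) - 2 * Bser"
proof (rule fps_ext)
  fix n
  show "(fps_X * fps_deriv Bser) $ n = (fps_X * (1 + Bser) - 2 * Bser) $ n"
  proof (cases "n \<ge> 2")
    case False
    then consider "n = 0" | "n = 1" by linarith
    then show ?thesis
      by cases (simp_all add: Bser_def seqB_def numeral_fps_const)
  next
    case True
    have l: "(fps_X * fps_deriv Bser) $ n = of_nat n * Bser $ n"
      using True by (cases n) simp_all
    have r: "(fps_X * (1 + Bser) - 2 * Bser) $ n = Bser $ (n-1) - 2 * Bser $ n"
      using True by (cases n) (simp_all add: numeral_fps_const)
    have f: "(fact (n+2) :: complex) = of_nat (n+2) * fact (n+1)"
      by (metis add_Suc_right fact_Suc one_add_one plus_1_eq_Suc)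
    have n1: "n - 1 + 2 = n + 1" using True by simp
    have b1: "Bser $ n = 2 / fact (n+2)" using True by (simp add: Bn)
    have b2: "Bser $ (n-1) = 2 / fact (n+1)" using True Bn[of "n-1"] n1 by simp
    have "of_nat n * Bser $ n = Bser $ (n-1) - 2 * Bser $ n"
      unfolding b1 b2 f by (rule dB_aux) (rule fact_nonzero)
    then show ?thesis using l r by simp
  qed
qed

lemma dK: "2 * (fps_X * fps_deriv Kser) = 2 * Kser - 2 * Kser^3 - fps_X * Kser"
proof -
  let ?K = Kser and ?B = Bser
  have "fps_deriv (?K^2 * (1 + ?B)) = 0" using K2 by simp
  then have d: "2 * ?K * fps_deriv ?K * (1 + ?B) + ?K^2 * fps_deriv ?B = 0"
    by (simp add: fps_deriv_power power2_eq_square algebra_simps)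
  have "0 = fps_X * ?K * (2 * ?K * fps_deriv ?K * (1 + ?B) + ?K^2 * fps_deriv ?B)"
    using d by simp
  also have "\<dots> = 2 * (fps_X * fps_deriv ?K) * (?K^2 * (1 + ?B)) + ?K^3 * (fps_X * fps_deriv ?B)"
    by (simp add: algebra_simps power2_eq_square power3_eq_cube)
  also have "\<dots> = 2 * (fps_X * fps_deriv ?K) + ?K^3 * (fps_X * (1 + ?B) - 2 * ?B)"
    unfolding K2 dB by simp
  also have "?K^3 * (fps_X * (1 + ?B) - 2 * ?B) = fps_X * ?K * (?K^2 * (1 + ?B)) - 2 * (?K * (?K^2 * (1 + ?B)) - ?K^3)"
    by (simp add: algebra_simps power2_eq_square power3_eq_cube)
  also have "\<dots> = fps_X * ?K - 2 * (?K - ?K^3)" unfolding K2 by simp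
  finally have "0 = 2 * (fps_X * fps_deriv ?K) + (fps_X * ?K - 2 * (?K - ?K^3))" .
  then show ?thesis by (simp add: algebra_simps eq_neg_iff_add_eq_0 add_eq_0_iff)
qed

definition Psi :: "nat \<Rightarrow> complex \<Rightarrow> complex" where
  "Psi N v = (fps_exp v * Kser^N) $ (N - 1)"

lemma Psi1: "Psi 1 v = 1" by (simp add: Psi_def)

lemma diff_expand:
  assumes N: "N \<ge> 2"
  shows "2 * (Psi N (v+1) - Psi N v) = 2 * (fps_exp v * Kser^N) $ (N-2) + (fps_X^2 * (fps_exp v * Kser^(N-2))) $ (N-1)"
proof -
  let ?e = "fps_exp v" and ?K = Kser
  have KN: "?K^N = ?K^(N-2) * ?K^2"
  proof -
    have "N = (N-2)+2" using N by simp
    then show ?thesis by (metis power_add)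
  qed
  have "fps_exp (v+1) - ?e = ?e * (Es - 1)" by (simp add: Es_def fps_exp_add_mult algebra_simps)
  then have "2 * (fps_exp (v+1) * ?K^N - ?e * ?K^N) = ?e * ?K^N * (2 * (Es - 1))"
    by (simp add: algebra_simps)
  also have "2 * (Es - 1) = 2 * fps_X + fps_X^2 * (1 + Bser)" using I2 by (simp add: algebra_simps)
  also have "?e * ?K^N * (2 * fps_X + fps_X^2 * (1 + Bser)) = 2 * (fps_X * (?e * ?K^N)) + fps_X^2 * (?e * ?K^(N-2) * (?K^2 * (1 + Bser)))"
    unfolding KN by (simp add: algebra_simps)
  also have "\<dots> = 2 * (fps_X * (?e * ?K^N)) + fps_X^2 * (?e * ?K^(N-2))" unfolding K2 by simp
  finally have eq: "fps_const 2 * (fps_exp (v+1) * ?K^N - ?e * ?K^N) = fps_const 2 * (fps_X * (?e * ?K^N)) + fps_X^2 * (?e * ?K^(N-2))"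
    by (simp add: numeral_fps_const)
  have "2 * (Psi N (v+1) - Psi N v) = (fps_const 2 * (fps_exp (v+1) * ?K^N - ?e * ?K^N)) $ (N-1)"
    by (simp add: Psi_def)
  also have "\<dots> = 2 * (fps_X * (?e * ?K^N)) $ (N-1) + (fps_X^2 * (?e * ?K^(N-2))) $ (N-1)"
    unfolding eq by simp
  also have "(fps_X * (?e * ?K^N)) $ (N-1) = (?e * ?K^N) $ (N-2)"
    using N by (simp add: numeral_2_eq_2)
  finally show ?thesis .
qed

lemma Psi2: "Psi 2 (v+1) - Psi 2 v = 1"
proof -
  have "2 * (Psi 2 (v+1) - Psi 2 v) = 2 * (fps_exp v * Kser^2) $ 0 + (fps_X^2 * (fps_exp v * Kser^0)) $ 1"
    using diff_expand[of 2 v] by simp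
  also have "\<dots> = 2 * 1" by (simp add: fps_X_power_mult_nth fps_power_zeroth)
  finally have d: "2 * (Psi 2 (v+1) - Psi 2 v) = 2 * 1" .
  show ?thesis using d by (metis mult_left_cancel zero_neq_numeral)
qed

lemma deriv_id:
  assumes M: "M \<ge> 1"
  shows "2 * of_nat M * (fps_exp v * Kser^(M+2)) $ M = (2 * v - of_nat M) * (fps_exp v * Kser^M) $ (M-1)"
proof -
  let ?e = "fps_exp v" and ?K = Kser
  define f where "f = ?e * ?K^M"
  define g where "g = ?e * ?K^(M+2)"
  have "2 * (fps_X * fps_deriv f) = 2 * fps_const v * (fps_X * f) + fps_const (of_nat M) * ?e * ?K^(M-1) * (2 * (fps_X * fps_deriv ?K))"
    unfolding f_def by (simp add: fps_deriv_power algebra_simps)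
  also have "\<dots> = 2 * fps_const v * (fps_X * f) + fps_const (of_nat M) * ?e * (?K^(M-1) * (2 * ?K - 2 * ?K^3 - fps_X * ?K))"
    unfolding dK by (simp add: algebra_simps)
  also have "?K^(M-1) * (2 * ?K - 2 * ?K^3 - fps_X * ?K) = 2 * ?K^M - 2 * ?K^(M+2) - fps_X * ?K^M"
  proof -
    have a: "?K^(M-1) * ?K = ?K^M" using M by (simp add: power_Suc2[symmetric])
    have b: "?K^(M-1) * ?K^3 = ?K^(M+2)" using M by (simp add: power_add[symmetric])
    have "?K^(M-1) * (2 * ?K - 2 * ?K^3 - fps_X * ?K) = 2 * (?K^(M-1) * ?K) - 2 * (?K^(M-1) * ?K^3) - fps_X * (?K^(M-1) * ?K)"
      by (simp add: algebra_simps)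
    then show ?thesis unfolding a b .
  qed
  also have "fps_const (of_nat M) * ?e * (2 * ?K^M - 2 * ?K^(M+2) - fps_X * ?K^M) = fps_const (of_nat M) * (2 * f - 2 * g - fps_X * f)"
    unfolding f_def g_def by (simp add: algebra_simps)
  finally have eq: "2 * (fps_X * fps_deriv f) = 2 * fps_const v * (fps_X * f) + fps_const (of_nat M) * (2 * f - 2 * g - fps_X * f)" .
  have "(2 * (fps_X * fps_deriv f)) $ M = 2 * (of_nat M * f $ M)"
    using M by (cases M) (simp_all add: numeral_fps_const)
  moreover have "(2 * fps_const v * (fps_X * f) + fps_const (of_nat M) * (2 * f - 2 * g - fps_X * f)) $ M
      = 2 * v * f $ (M-1) + of_nat M * (2 * f $ M - 2 * g $ M - f $ (M-1))"
    using M by (cases M) (simp_all add: numeral_fps_const)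
  ultimately have "2 * (of_nat M * f $ M) = 2 * v * f $ (M-1) + of_nat M * (2 * f $ M - 2 * g $ M - f $ (M-1))"
    using eq by simp
  then have "2 * of_nat M * g $ M = (2 * v - of_nat M) * f $ (M-1)"
    by (simp add: algebra_simps)
  then show ?thesis unfolding f_def g_def .
qed

lemma Psi_step:
  assumes N: "N \<ge> 3"
  shows "of_nat (N-2) * (Psi N (v+1) - Psi N v) = v * Psi (N-2) v"
proof -
  define M where "M = N - 2"
  have M: "M \<ge> 1" "N = M + 2" using N unfolding M_def by auto
  have e1: "2 * (Psi N (v+1) - Psi N v) = 2 * (fps_exp v * Kser^N) $ M + (fps_X^2 * (fps_exp v * Kser^M)) $ (M+1)"
    using diff_expand[of N v] N M by simp
  have e2: "(fps_X^2 * (fps_exp v * Kser^M)) $ (M+1) = Psi M v"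
    using M by (simp add: Psi_def fps_X_power_mult_nth)
  have e3: "2 * of_nat M * (fps_exp v * Kser^N) $ M = (2 * v - of_nat M) * Psi M v"
    using deriv_id[OF M(1), of v] M by (simp add: Psi_def)
  have "2 * (of_nat M * (Psi N (v+1) - Psi N v)) = of_nat M * (2 * (Psi N (v+1) - Psi N v))" by simp
  also have "\<dots> = 2 * of_nat M * (fps_exp v * Kser^N) $ M + of_nat M * Psi M v"
    unfolding e1 e2 by (simp add: algebra_simps)
  also have "\<dots> = 2 * (v * Psi M v)" unfolding e3 by (simp add: algebra_simps)
  finally show ?thesis unfolding M_def by simp
qed


declare dfact.simps[simp del]

lemma dfact_step: "n > 0 \<Longrightarrow> dfact n = n * dfact (n - 2)"
  by (subst dfact.simps) simp

lemma dfact_nonpos: "n \<le> 0 \<Longrightarrow> dfact n = 1"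
  by (subst dfact.simps) simp

lemma gchoose_Suc_rec: "((a::complex) gchoose (Suc k)) * fact (Suc k) = (a gchoose k) * fact k * (a - of_nat k)"
  unfolding gbinomial_mult_fact' by simp

lemma coeff_mult:
  fixes N :: nat
  assumes N: "N \<ge> 1"
  shows "(of_int (dfact (int N - 2 + 2 * int k)) :: complex)
       = (-1)^k * fact k * of_int (dfact (int N - 2)) * ((- of_nat N / 2) gchoose k) * 2^k"
proof (induction k)
  case 0 then show ?case by simp
next
  case (Suc k)
  have "dfact (int N - 2 + 2 * int (Suc k)) = (int N + 2 * int k) * dfact (int N - 2 + 2 * int k)"
    using N by (subst dfact_step) (simp_all add: algebra_simps)
  then have "(of_int (dfact (int N - 2 + 2 * int (Suc k))) :: complex)
      = (of_nat N + 2 * of_nat k) * of_int (dfact (int N - 2 + 2 * int k))" by simp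
  also have "\<dots> = (of_nat N + 2 * of_nat k) * ((-1)^k * fact k * of_int (dfact (int N - 2)) * ((- of_nat N / 2) gchoose k) * 2^k)"
    using Suc.IH by simp
  also have "\<dots> = (-1)^(Suc k) * (((- of_nat N / 2) gchoose k) * fact k * (- of_nat N / 2 - of_nat k)) * of_int (dfact (int N - 2)) * 2^(Suc k)"
    by (simp add: field_simps)
  also have "\<dots> = (-1)^(Suc k) * fact (Suc k) * of_int (dfact (int N - 2)) * ((- of_nat N / 2) gchoose (Suc k)) * 2^(Suc k)"
    unfolding gchoose_Suc_rec[symmetric] by (simp add: algebra_simps)
  finally show ?case .
qed

lemma coeff_eq:
  fixes N :: nat
  assumes N: "N \<ge> 1"
  shows "(of_int (dfact (int N - 2 + 2 * int k)) :: complex) / ((-1)^k * fact k)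
       = of_int (dfact (int N - 2)) * ((- of_nat N / 2) gchoose k) * 2^k"
  unfolding coeff_mult[OF N] by simp

lemma power_signed:
  fixes P Q :: "complex fps"
  assumes "\<And>j. P $ j = c * s^j * Q $ j"
  shows "(P^k) $ m = c^k * s^m * (Q^k) $ m"
proof (induction k arbitrary: m)
  case 0 then show ?case by simp
next
  case (Suc k)
  have "(P^Suc k) $ m = (\<Sum>i=0..m. P $ i * (P^k) $ (m - i))" by (simp add: fps_mult_nth)
  also have "\<dots> = (\<Sum>i=0..m. c^(Suc k) * s^m * (Q $ i * (Q^k) $ (m - i)))"
  proof (rule sum.cong[OF refl])
    fix i assume "i \<in> {0..m}"
    then have "s^i * s^(m-i) = s^m" by (simp add: power_add[symmetric])
    then show "P $ i * (P^k) $ (m - i) = c^(Suc k) * s^m * (Q $ i * (Q^k) $ (m - i))"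
      unfolding assms Suc.IH by (simp add: algebra_simps)
  qed
  also have "\<dots> = c^(Suc k) * s^m * (Q^Suc k) $ m"
    by (simp add: fps_mult_nth sum_distrib_left)
  finally show ?case .
qed

definition inner :: "nat \<Rightarrow> (nat \<Rightarrow> complex) \<Rightarrow> nat \<Rightarrow> complex" where
  "inner N sq m = (\<Sum>k=0..m. of_int (dfact (int N - 2 + 2 * int k)) / ((-1)^k * fact k) * deMoivre sq m k)"

lemma deMoivre_fps: "deMoivre sq m k = (Abs_fps (\<lambda>j. if j = 0 then 0 else sq j) ^ k) $ m"
  by (simp add: deMoivre_def)

lemma Pw_nth: "Pw a Z $ m = (\<Sum>k=0..m. (a gchoose k) * (Z^k) $ m)"
  unfolding Pw_def by (simp add: fps_compose_nth)

lemma inner_gen: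
  assumes N: "N \<ge> 1"
  and Z: "\<And>j. Z $ j = 2 * s^j * Abs_fps (\<lambda>j. if j = 0 then 0 else sq j) $ j"
  shows "s^m * inner N sq m = of_int (dfact (int N - 2)) * Pw (- of_nat N / 2) Z $ m"
proof -
  let ?Q = "Abs_fps (\<lambda>j. if j = 0 then 0 else sq j)"
  have "s^m * inner N sq m = (\<Sum>k=0..m. of_int (dfact (int N - 2)) * (((- of_nat N / 2) gchoose k) * (2^k * s^m * (?Q^k) $ m)))"
    unfolding inner_def sum_distrib_left
    by (rule sum.cong[OF refl], subst coeff_eq[OF N]) (simp add: deMoivre_fps algebra_simps)
  also have "\<dots> = of_int (dfact (int N - 2)) * Pw (- of_nat N / 2) Z $ m"
    unfolding Pw_nth sum_distrib_left power_signed[of Z 2 s ?Q, OF Z] by simp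
  finally show ?thesis .
qed

lemma ZA: "Aser $ j = 2 * (-1)^j * Abs_fps (\<lambda>j. if j = 0 then 0 else seqA j) $ j"
  by (simp add: Aser_def)

lemma ZB: "Bser $ j = 2 * 1^j * Abs_fps (\<lambda>j. if j = 0 then 0 else seqB j) $ j"
  by (simp add: Bser_def)

lemma LA:
  assumes N: "N \<ge> 1"
  shows "(\<Sum>m=0..N-1. (-1)^m * (v gchoose (N-1-m)) * inner N seqA m)
       = of_int (dfact (int N - 2)) * Psi N (v+1)"
proof -
  have "(\<Sum>m=0..N-1. (-1)^m * (v gchoose (N-1-m)) * inner N seqA m)
      = (\<Sum>m=0..N-1. of_int (dfact (int N - 2)) * (Pw (- of_nat N / 2) Aser $ m * fps_binomial v $ (N-1-m)))"
  proof (rule sum.cong[OF refl])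
    fix m
    show "(-1)^m * (v gchoose (N-1-m)) * inner N seqA m = of_int (dfact (int N - 2)) * (Pw (- of_nat N / 2) Aser $ m * fps_binomial v $ (N-1-m))"
      using inner_gen[OF N ZA, of m] by (simp add: algebra_simps)
  qed
  also have "\<dots> = of_int (dfact (int N - 2)) * (fps_binomial v * Pw (- of_nat N / 2) Aser) $ (N-1)"
    by (simp add: fps_mult_nth sum_distrib_left mult.commute[of "fps_binomial v"])
  also have "\<dots> = of_int (dfact (int N - 2)) * Psi N (v+1)"
    unfolding main_sub[OF N] Psi_def Pw_K ..
  finally show ?thesis .
qed

lemma LB:
  assumes N: "N \<ge> 1"
  shows "(\<Sum>m=0..N-1. v^(N-1-m) / fact (N-1-m) * inner N seqB m)
       = of_int (dfact (int N - 2)) * Psi N v"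
proof -
  have "(\<Sum>m=0..N-1. v^(N-1-m) / fact (N-1-m) * inner N seqB m)
      = (\<Sum>m=0..N-1. of_int (dfact (int N - 2)) * (Pw (- of_nat N / 2) Bser $ m * fps_exp v $ (N-1-m)))"
  proof (rule sum.cong[OF refl])
    fix m
    show "v^(N-1-m) / fact (N-1-m) * inner N seqB m = of_int (dfact (int N - 2)) * (Pw (- of_nat N / 2) Bser $ m * fps_exp v $ (N-1-m))"
      using inner_gen[OF N ZB, of m] by (simp add: algebra_simps)
  qed
  also have "\<dots> = of_int (dfact (int N - 2)) * (fps_exp v * Pw (- of_nat N / 2) Bser) $ (N-1)"
    by (simp add: fps_mult_nth sum_distrib_left mult.commute[of "fps_exp v"])
  also have "\<dots> = of_int (dfact (int N - 2)) * Psi N v"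
    unfolding Psi_def Pw_K ..
  finally show ?thesis .
qed


declare dfact.simps[simp del]

lemma rho_eq: "rho r v = (if r = 0 then 1 else 0) - of_int (dfact (2 * int r)) * Psi (2*r+2) (v+1)"
proof -
  have "(\<Sum>m=0..2*r+1. (-1)^m * (v gchoose (2*r+1-m)) *
        (\<Sum>k=0..m. of_int (dfact (2*int r + 2*int k)) / ((-1)^k * fact k) * deMoivre seqA m k))
      = (\<Sum>m=0..(2*r+2)-1. (-1)^m * (v gchoose ((2*r+2)-1-m)) * inner (2*r+2) seqA m)"
    unfolding inner_def by (simp add: algebra_simps)
  also have "\<dots> = of_int (dfact (int (2*r+2) - 2)) * Psi (2*r+2) (v+1)"
    by (rule LA) simp
  finally show ?thesis unfolding rho_def by simp
qed

lemma rhot_eq: "rhot r v = - (of_int (dfact (2 * int r)) * Psi (2*r+2) v)"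
proof -
  have "(\<Sum>m=0..2*r+1. v^(2*r+1-m) / fact (2*r+1-m) *
        (\<Sum>k=0..m. of_int (dfact (2*int r + 2*int k)) / ((-1)^k * fact k) * deMoivre seqB m k))
      = (\<Sum>m=0..(2*r+2)-1. v^((2*r+2)-1-m) / fact ((2*r+2)-1-m) * inner (2*r+2) seqB m)"
    unfolding inner_def by (simp add: algebra_simps)
  also have "\<dots> = of_int (dfact (int (2*r+2) - 2)) * Psi (2*r+2) v"
    by (rule LB) simp
  finally show ?thesis unfolding rhot_def by simp
qed

lemma gam_eq: "gam r v = of_int (dfact (2 * int r - 1)) * Psi (2*r+1) (v+1)"
proof -
  have "(\<Sum>m=0..2*r. (-1)^m * (v gchoose (2*r-m)) *
        (\<Sum>k=0..m. of_int (dfact (2*int r + 2*int k - 1)) / ((-1)^k * fact k) * deMoivre seqA m k))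
      = (\<Sum>m=0..(2*r+1)-1. (-1)^m * (v gchoose ((2*r+1)-1-m)) * inner (2*r+1) seqA m)"
    unfolding inner_def by (simp add: algebra_simps)
  also have "\<dots> = of_int (dfact (int (2*r+1) - 2)) * Psi (2*r+1) (v+1)"
    by (rule LA) simp
  finally show ?thesis unfolding gam_def by (simp add: algebra_simps)
qed

lemma gamt_eq: "gamt r v = of_int (dfact (2 * int r - 1)) * Psi (2*r+1) v"
proof -
  have "(\<Sum>m=0..2*r. v^(2*r-m) / fact (2*r-m) *
        (\<Sum>k=0..m. of_int (dfact (2*int r + 2*int k - 1)) / ((-1)^k * fact k) * deMoivre seqB m k))
      = (\<Sum>m=0..(2*r+1)-1. v^((2*r+1)-1-m) / fact ((2*r+1)-1-m) * inner (2*r+1) seqB m)"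
    unfolding inner_def by (simp add: algebra_simps)
  also have "\<dots> = of_int (dfact (int (2*r+1) - 2)) * Psi (2*r+1) v"
    by (rule LB) simp
  finally show ?thesis unfolding gamt_def by (simp add: algebra_simps)
qed

lemma alg1:
  fixes D0 D1 n A B C v :: complex
  assumes "D0 = n * D1" "n * (A - B) = v * C"
  shows "-(D0 * A) = -(D0 * B) + v * (-(D1 * C))"
  using assms by algebra

lemma alg2:
  fixes D0 D1 n A B C v :: complex
  assumes "D0 = n * D1" "n * (A - B) = v * C"
  shows "D0 * A = D0 * B + v * (D1 * C)"
  using assms by algebra

theorem proposition6p3:
  fixes v :: complex
  shows "rho 0 v = rhot 0 v \<and> gam 0 v = gamt 0 v \<and>
    (\<forall>r::nat. r \<ge> 1 \<longrightarrow> rho r v = rhot r v + v * rhot (r - 1) v) \<and>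
    (\<forall>r::nat. r \<ge> 1 \<longrightarrow> gam r v = gamt r v + v * gamt (r - 1) v)"
proof (intro conjI allI impI)
  have d0: "dfact 0 = 1" "dfact (-1) = 1" by (simp_all add: dfact_nonpos)
  show "rho 0 v = rhot 0 v"
    unfolding rho_eq rhot_eq using Psi2[of v, unfolded numeral_2_eq_2] by (simp add: d0 algebra_simps)
  show "gam 0 v = gamt 0 v"
    unfolding gam_eq gamt_eq using Psi1[of v] Psi1[of "v+1"] by (simp add: d0)
next
  fix r :: nat assume r: "r \<ge> 1"
  have st: "of_nat (2*r) * (Psi (2*r+2) (v+1) - Psi (2*r+2) v) = v * Psi (2*r) v"
    using Psi_step[of "2*r+2" v] r by simp
  have df: "dfact (2 * int r) = 2 * int r * dfact (2 * int (r - 1))"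
    using r by (subst dfact_step) (simp_all add: algebra_simps of_nat_diff)
  have e: "2 * (r - 1) + 2 = 2 * r" using r by simp
  have dfc: "(of_int (dfact (2 * int r)) :: complex) = of_nat (2*r) * of_int (dfact (2 * int (r - 1)))"
    unfolding df by simp
  have R1: "rho r v = - (of_int (dfact (2 * int r)) * Psi (2*r+2) (v+1))"
    using r unfolding rho_eq by simp
  show "rho r v = rhot r v + v * rhot (r - 1) v"
    unfolding R1 rhot_eq e by (rule alg1[OF dfc st])
next
  fix r :: nat assume r: "r \<ge> 1"
  have st: "of_nat (2*r-1) * (Psi (2*r+1) (v+1) - Psi (2*r+1) v) = v * Psi (2*r-1) v"
    using Psi_step[of "2*r+1" v] r by simp
  have df: "dfact (2 * int r - 1) = (2 * int r - 1) * dfact (2 * int (r - 1) - 1)"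
    using r by (subst dfact_step) (simp_all add: algebra_simps of_nat_diff)
  have e: "2 * (r - 1) + 1 = 2 * r - 1" using r by simp
  have e2: "(of_nat (2*r-1) :: complex) = 2 * of_nat r - 1" using r by (simp add: of_nat_diff)
  have dfc: "(of_int (dfact (2 * int r - 1)) :: complex) = of_nat (2*r-1) * of_int (dfact (2 * int (r - 1) - 1))"
    unfolding df e2 by simp
  have e3: "2 * int (r - 1) - 1 = int (2 * r - 1) - 2" using r by simp
  show "gam r v = gamt r v + v * gamt (r - 1) v"
    unfolding gam_eq gamt_eq e by (rule alg2[OF dfc st])
qed


end
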